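(* Consider a sequence of two-class classification problems indexed by the sample size $n$ (the dimension $p$, the means $\mu_1,\mu_2\in\mathbb{R}^p$, the covariance matrix $\Sigma$ and the regularization parameter $c$ may all depend on $n$). Let $\mu_d=(\mu_1-\mu_2)/2$, $\mu_a=(\mu_1+\mu_2)/2$, and let $\epsilon>0$ be a constant (not depending on $n$) such that $\max_j|\mu_{dj}|>\epsilon$ and $$c>\epsilon+\frac{1}{\max_j|\mu_{dj}|}.$$ Let $\hat\mu_1,\hat\mu_2,\hat\Sigma$ be estimators of $\mu_1,\mu_2,\Sigma$ based on training data of size $n$, and let $a_n\to0$ be a sequence such that $\|\hat\Sigma-\Sigma\|_\infty=O_p(a_n)$ and $\|\hat\mu_i-\mu_i\|_\infty=O_p(a_n)$ for $i=1,2$. Let $$w_c=\operatorname{argmin}_{\|w\|_1\le c,\ w^T\mu_d=1} w^T\Sigma w,\qquad \hat w_c=\operatorname{argmin}_{\|w\|_1\le c,\ w^T\hat\mu_d=1} w^T\hat\Sigma w,$$ where $\hat\mu_d=(\hat\mu_1-\hat\mu_2)/2$, $\hat\mu_a=(\hat\mu_1+\hat\mu_2)/2$, and consider the oracle rule $\delta_{w_c}(x)=1+1(w_c^T(x-\mu_a)<0)$ and the ROAD rule $\hat\delta(x)=1+1(\hat w_c^T(x-\hat\mu_a)<0)$. Then, as $n\to\infty$, $$W(\hat\delta)-W(\delta_{w_c})=O_p(d_n),\qquad d_n=c^2a_n\bigl(1+c^2\|\Sigma\|_\infty\bigr).$$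
   Context: A new observation $X\in\mathbb{R}^p$ belongs to group 1 or group 2 with probability $\tfrac12$ each, and given group $i$ it is distributed as $N_p(\mu_i,\Sigma)$. A classification rule $\delta$ assigns $x$ to group $\delta(x)\in\{1,2\}$; $1(\cdot)$ denotes the indicator function. $W(\delta)$ denotes the misclassification rate of $\delta$, i.e. the probability (over the new observation $X$ and its group label, with the training data, and hence $\hat\mu_1,\hat\mu_2,\hat\Sigma,\hat w_c$, held fixed) that $\delta(X)$ differs from the true group of $X$. For a vector $v$, $\|v\|_1=\sum_j|v_j|$ and $\|v\|_\infty=\max_j|v_j|$; for a matrix $A$, $\|A\|_\infty=\max_{j,k}|A_{jk}|$ (maximal absolute entry). $\mu_{dj}$ is the $j$-th coordinate of $\mu_d$. The minimizer $\hat w_c$ is taken on the event that its feasible set is nonempty. *)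

theory Defs
  imports "HOL-Probability.Probability"
begin

(* Vectors in R^p are functions nat => real, only coordinates j < p matter.
   p x p matrices are functions nat => nat => real, only entries j,k < p matter. *)

definition vinf :: "nat \<Rightarrow> (nat \<Rightarrow> real) \<Rightarrow> real" where
  "vinf p v = Max (insert 0 ((\<lambda>j. \<bar>v j\<bar>) ` {..<p}))"

definition vl1 :: "nat \<Rightarrow> (nat \<Rightarrow> real) \<Rightarrow> real" where
  "vl1 p v = (\<Sum>j<p. \<bar>v j\<bar>)"

definition minf :: "nat \<Rightarrow> (nat \<Rightarrow> nat \<Rightarrow> real) \<Rightarrow> real" where
  "minf p A = Max (insert 0 ((\<lambda>(j,k). \<bar>A j k\<bar>) ` ({..<p} \<times> {..<p})))"

definition dotp :: "nat \<Rightarrow> (nat \<Rightarrow> real) \<Rightarrow> (nat \<Rightarrow> real) \<Rightarrow> real" where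
  "dotp p v w = (\<Sum>j<p. v j * w j)"

definition quadf :: "nat \<Rightarrow> (nat \<Rightarrow> nat \<Rightarrow> real) \<Rightarrow> (nat \<Rightarrow> real) \<Rightarrow> real" where
  "quadf p A w = (\<Sum>j<p. \<Sum>k<p. w j * A j k * w k)"

definition posdef :: "nat \<Rightarrow> (nat \<Rightarrow> nat \<Rightarrow> real) \<Rightarrow> bool" where
  "posdef p A \<longleftrightarrow> (\<forall>j<p. \<forall>k<p. A j k = A k j) \<and>
     (\<forall>v. (\<exists>j<p. v j \<noteq> 0) \<longrightarrow> quadf p A v > 0)"

definition feas :: "nat \<Rightarrow> real \<Rightarrow> (nat \<Rightarrow> real) \<Rightarrow> (nat \<Rightarrow> real) set" where
  "feas p c mu = {w. (\<forall>j\<ge>p. w j = 0) \<and> vl1 p w \<le> c \<and> dotp p w mu = 1}"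

definition is_minimizer :: "nat \<Rightarrow> real \<Rightarrow> (nat \<Rightarrow> real) \<Rightarrow> (nat \<Rightarrow> nat \<Rightarrow> real)
    \<Rightarrow> (nat \<Rightarrow> real) \<Rightarrow> bool" where
  "is_minimizer p c mu A w \<longleftrightarrow> w \<in> feas p c mu \<and> (\<forall>v\<in>feas p c mu. quadf p A w \<le> quadf p A v)"

(* N is the multivariate normal distribution N_p(mu, S) on R^p (Cramer-Wold definition:
   every linear functional w^T X is univariate normal N(w^T mu, w^T S w),
   a point mass when the variance is 0). *)
definition mvnormal :: "nat \<Rightarrow> (nat \<Rightarrow> real) \<Rightarrow> (nat \<Rightarrow> nat \<Rightarrow> real) \<Rightarrow> (nat \<Rightarrow> real) measure \<Rightarrow> bool" where
  "mvnormal p mu S N \<longleftrightarrow> prob_space N \<and> sets N = sets (PiM {..<p} (\<lambda>_. borel)) \<and>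
     (\<forall>w. distr N borel (\<lambda>x. dotp p w x) =
        (if quadf p S w = 0 then return borel (dotp p w mu)
         else density lborel (normal_density (dotp p w mu) (sqrt (quadf p S w)))))"

definition linrule :: "nat \<Rightarrow> (nat \<Rightarrow> real) \<Rightarrow> (nat \<Rightarrow> real) \<Rightarrow> (nat \<Rightarrow> real) \<Rightarrow> nat" where
  "linrule p w m x = 1 + (if dotp p w (\<lambda>j. x j - m j) < 0 then 1 else 0)"

definition misrate :: "(nat \<Rightarrow> real) measure \<Rightarrow> (nat \<Rightarrow> real) measure \<Rightarrow> ((nat \<Rightarrow> real) \<Rightarrow> nat) \<Rightarrow> real" where
  "misrate P1 P2 \<delta> = 1/2 * measure P1 {x \<in> space P1. \<delta> x \<noteq> 1} + 1/2 * measure P2 {x \<in> space P2. \<delta> x \<noteq> 2}"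

(* X_n = O_p(r_n), in (outer) probability, X_n defined on probability space M n *)
definition bigOp :: "(nat \<Rightarrow> 'w measure) \<Rightarrow> (nat \<Rightarrow> 'w \<Rightarrow> real) \<Rightarrow> (nat \<Rightarrow> real) \<Rightarrow> bool" where
  "bigOp M X r \<longleftrightarrow> (\<forall>e>0. \<exists>K. \<exists>N. \<forall>n\<ge>N. \<exists>A\<in>sets (M n).
      {\<omega> \<in> space (M n). \<bar>X n \<omega>\<bar> > K * r n} \<subseteq> A \<and> measure (M n) A \<le> e)"

end

theory Submission
  imports Defs
begin


abbreviation Std :: "real measure" where "Std \<equiv> density lborel (\<lambda>x. ennreal (std_normal_density x))"
definition G :: "real \<Rightarrow> real" where "G z = measure Std {..<z}"

lemma normal_std_distr:
  assumes s: "\<sigma> > 0" and b: "\<alpha> \<noteq> 0"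
    and e1: "\<beta> + \<alpha> * \<mu> = 0" and e2: "\<bar>\<alpha>\<bar> * \<sigma> = 1"
  shows "distr (density lborel (\<lambda>x. ennreal (normal_density \<mu> \<sigma> x))) lborel (\<lambda>x. \<beta> + \<alpha> * x) = Std"
proof -
  let ?D = "density lborel (\<lambda>x. ennreal (normal_density \<mu> \<sigma> x))"
  interpret prob_space ?D by (rule prob_space_normal_density) (use s in simp)
  have "distributed ?D lborel (\<lambda>x. x) (normal_density \<mu> \<sigma>)"
    unfolding distributed_def by (simp add: distr_id2)
  from normal_density_affine[OF this s b, of \<beta>]
  have "distributed ?D lborel (\<lambda>x. \<beta> + \<alpha> * x) (normal_density 0 1)"
    using e1 e2 by simp
  then show ?thesis by (simp add: distributed_def)
qed

lemma G_normal_lt: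
  assumes s: "\<sigma> > 0"
  shows "measure (density lborel (\<lambda>x. ennreal (normal_density \<mu> \<sigma> x))) {..<t} = G ((t - \<mu>) / \<sigma>)"
proof -
  let ?D = "density lborel (\<lambda>x. ennreal (normal_density \<mu> \<sigma> x))"
  let ?f = "\<lambda>x. (-\<mu>/\<sigma>) + (1/\<sigma>) * x"
  have d: "distr ?D lborel ?f = Std"
    by (rule normal_std_distr) (use s in \<open>auto simp: field_simps\<close>)
  have "measure Std {..<(t - \<mu>) / \<sigma>} = measure ?D (?f -` {..<(t - \<mu>) / \<sigma>} \<inter> space ?D)"
    unfolding d[symmetric] by (rule measure_distr) auto
  also have "?f -` {..<(t - \<mu>) / \<sigma>} \<inter> space ?D = {..<t}"
    using s by (auto simp: field_simps)
  finally show ?thesis by (simp add: G_def)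
qed

lemma Std_singleton: "measure Std {z} = 0"
proof -
  have "emeasure Std {z} = (\<integral>\<^sup>+ x. ennreal (std_normal_density x) * indicator {z} x \<partial>lborel)"
    by (rule emeasure_density) auto
  also have "\<dots> = 0"
    by (simp add: nn_integral_indicator_singleton)
  finally show ?thesis by (simp add: measure_def)
qed

lemma G_le: "measure Std {..z} = G z"
proof -
  interpret prob_space Std by (rule prob_space_normal_density) simp
  have "measure Std ({..<z} \<union> {z}) = measure Std {..<z} + measure Std {z}"
    by (intro finite_measure_Union) auto
  moreover have "{..<z} \<union> {z} = {..z}" by auto
  ultimately have "measure Std {..z} = measure Std {..<z} + measure Std {z}" by simp
  then show ?thesis using Std_singleton by (simp add: G_def)
qed

lemma G_normal_ge:
  assumes s: "\<sigma> > 0"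
  shows "measure (density lborel (\<lambda>x. ennreal (normal_density \<mu> \<sigma> x))) {t..} = G ((\<mu> - t) / \<sigma>)"
proof -
  let ?D = "density lborel (\<lambda>x. ennreal (normal_density \<mu> \<sigma> x))"
  let ?f = "\<lambda>x. (\<mu>/\<sigma>) + (-1/\<sigma>) * x"
  have d: "distr ?D lborel ?f = Std"
    by (rule normal_std_distr) (use s in \<open>auto simp: field_simps\<close>)
  have "measure Std {..(\<mu> - t) / \<sigma>} = measure ?D (?f -` {..(\<mu> - t) / \<sigma>} \<inter> space ?D)"
    unfolding d[symmetric] by (rule measure_distr) auto
  also have "?f -` {..(\<mu> - t) / \<sigma>} \<inter> space ?D = {t..}"
    using s by (auto simp: field_simps)
  finally show ?thesis by (simp add: G_le)
qed

lemma Std_prob: "prob_space Std" by (rule prob_space_normal_density) simp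

lemma Std_emeasure: "A \<in> sets borel \<Longrightarrow> emeasure Std A = (\<integral>\<^sup>+ x. ennreal (std_normal_density x) * indicator A x \<partial>lborel)"
  by (rule emeasure_density) auto

lemma Std_measure_le:
  assumes "A \<in> sets borel" "emeasure Std A \<le> ennreal r" "r \<ge> 0"
  shows "measure Std A \<le> r"
proof -
  interpret prob_space Std by (rule Std_prob)
  have "emeasure Std A = ennreal (measure Std A)" by (simp add: emeasure_eq_measure)
  with assms show ?thesis by (simp add: ennreal_le_iff)
qed

lemma G_interval:
  assumes ab: "a \<le> b" "b \<le> 0"
  shows "G b - G a \<le> (b - a) * exp (-b\<^sup>2/2)"
proof -
  interpret prob_space Std by (rule Std_prob)
  have split: "measure Std ({..<a} \<union> {a..<b}) = measure Std {..<a} + measure Std {a..<b}"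
    by (intro finite_measure_Union) auto
  have "{..<a} \<union> {a..<b} = {..<b}" using ab by auto
  with split have eq: "G b - G a = measure Std {a..<b}" by (simp add: G_def)
  have "emeasure Std {a..<b} = (\<integral>\<^sup>+ x. ennreal (std_normal_density x) * indicator {a..<b} x \<partial>lborel)"
    by (rule Std_emeasure) auto
  also have "\<dots> \<le> (\<integral>\<^sup>+ x. ennreal (exp (-b\<^sup>2/2)) * indicator {a..<b} x \<partial>lborel)"
  proof (rule nn_integral_mono)
    fix x show "ennreal (std_normal_density x) * indicator {a..<b} x \<le> ennreal (exp (-b\<^sup>2/2)) * indicator {a..<b} x"
    proof (cases "x \<in> {a..<b}")
      case True
      then have "\<bar>b\<bar> \<le> \<bar>x\<bar>" using ab by auto
      then have "b\<^sup>2 \<le> x\<^sup>2" by (simp add: abs_le_square_iff)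
      then have e: "exp (-x\<^sup>2/2) \<le> exp (-b\<^sup>2/2)" by simp
      have "sqrt (2*pi) \<ge> 1" using pi_gt3 by (simp add: real_sqrt_ge_one)
      then have "1 / sqrt (2*pi) \<le> 1" by simp
      then have "std_normal_density x \<le> exp (-b\<^sup>2/2)"
        unfolding std_normal_density_def
        using e by (meson exp_ge_zero mult_le_one order_trans mult_right_mono zero_le_divide_1_iff real_sqrt_ge_zero zero_le_mult_iff pi_ge_zero zero_le_numeral mult_left_le_one_le) 
      then show ?thesis using True by (simp add: ennreal_leI)
    qed simp
  qed
  also have "\<dots> = ennreal (exp (-b\<^sup>2/2)) * emeasure lborel {a..<b}"
    by (rule nn_integral_cmult_indicator) auto
  also have "\<dots> = ennreal ((b - a) * exp (-b\<^sup>2/2))"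
    using ab by (simp add: ennreal_mult' mult.commute)
  finally have "emeasure Std {a..<b} \<le> ennreal ((b - a) * exp (-b\<^sup>2/2))" .
  then show ?thesis unfolding eq by (intro Std_measure_le) (use ab in auto)
qed

lemma G_tail:
  assumes b: "b < 0"
  shows "G b \<le> 1 / b\<^sup>2"
proof -
  have mom: "has_bochner_integral lborel (\<lambda>x. std_normal_density x * x ^ 2) 1"
    using std_normal_moment_even[of 1] by simp
  have int: "integrable lborel (\<lambda>x. std_normal_density x * x ^ 2 * (1 / b\<^sup>2))"
    using mom by (intro integrable_mult_left) (simp add: has_bochner_integral_iff)
  have ival: "integral\<^sup>L lborel (\<lambda>x. std_normal_density x * x ^ 2 * (1 / b\<^sup>2)) = 1 / b\<^sup>2"
    using has_bochner_integral_integral_eq[OF mom] by simp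
  have "emeasure Std {..<b} = (\<integral>\<^sup>+ x. ennreal (std_normal_density x) * indicator {..<b} x \<partial>lborel)"
    by (rule Std_emeasure) auto
  also have "\<dots> \<le> (\<integral>\<^sup>+ x. ennreal (std_normal_density x * x ^ 2 * (1 / b\<^sup>2)) \<partial>lborel)"
  proof (rule nn_integral_mono)
    fix x show "ennreal (std_normal_density x) * indicator {..<b} x \<le> ennreal (std_normal_density x * x ^ 2 * (1 / b\<^sup>2))"
    proof (cases "x < b")
      case True
      then have "\<bar>b\<bar> \<le> \<bar>x\<bar>" using b by auto
      then have "b\<^sup>2 \<le> x\<^sup>2" by (simp add: abs_le_square_iff)
      then have "1 \<le> x ^ 2 * (1 / b\<^sup>2)" using b by (simp add: field_simps)
      then have "std_normal_density x \<le> std_normal_density x * (x ^ 2 * (1 / b\<^sup>2))"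
        using mult_left_mono[of 1 "x ^ 2 * (1 / b\<^sup>2)" "std_normal_density x"] by simp
      then show ?thesis using True by (simp add: ennreal_leI mult.assoc)
    qed simp
  qed
  also have "\<dots> = ennreal (1 / b\<^sup>2)"
    using nn_integral_eq_integral[OF int] ival by simp
  finally have "emeasure Std {..<b} \<le> ennreal (1 / b\<^sup>2)" .
  then show ?thesis unfolding G_def by (intro Std_measure_le) auto
qed

lemma G_mono: "a \<le> b \<Longrightarrow> G a \<le> G b"
proof -
  assume "a \<le> b"
  interpret prob_space Std by (rule Std_prob)
  show ?thesis unfolding G_def by (rule finite_measure_mono) (use \<open>a \<le> b\<close> in auto)
qed

lemma G_nonneg: "0 \<le> G a" by (simp add: G_def)
lemma G_le1: "G a \<le> 1"
proof -
  interpret prob_space Std by (rule Std_prob)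
  show ?thesis unfolding G_def by simp
qed

lemma exp_cube_bound:
  fixes r :: real
  assumes r: "r > 0"
  shows "exp (-(1/r)\<^sup>2/2) \<le> 2 * r^3"
proof -
  define y where "y = 1/r"
  have y: "y > 0" unfolding y_def using r by (rule divide_pos_pos[OF zero_less_one])
  have "1 + y\<^sup>2/2 + (y\<^sup>2/2)\<^sup>2/2 \<le> exp (y\<^sup>2/2)"
    by (rule exp_lower_Taylor_quadratic) simp
  moreover have "y^3 \<le> 2 * (1 + y\<^sup>2/2 + (y\<^sup>2/2)\<^sup>2/2)"
  proof -
    have "0 \<le> (y - y\<^sup>2/2)\<^sup>2" by simp
    then show ?thesis by (simp add: power2_eq_square power3_eq_cube algebra_simps)
  qed
  ultimately have h: "y^3 \<le> 2 * exp (y\<^sup>2/2)" by (meson mult_left_mono order_trans zero_le_numeral)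
  have "exp (-y\<^sup>2/2) = 1 / exp (y\<^sup>2/2)" by (simp add: exp_minus field_simps)
  also have "\<dots> \<le> 2 / y^3" using h y by (simp add: field_simps)
  also have "\<dots> = 2 * r^3" by (simp add: y_def field_simps)
  finally show ?thesis by (simp add: y_def)
qed

lemma G_lip1:
  assumes s: "0 < s" and sr: "s \<le> r"
  shows "G (-1/r) - G (-1/s) \<le> 4 * (r\<^sup>2 - s\<^sup>2)"
proof -
  have r: "r > 0" using s sr by simp
  show ?thesis
  proof (cases "r \<le> 2 * s")
    case True
    have ab: "-1/s \<le> -1/r" using s sr by (simp add: field_simps)
    have "G (-1/r) - G (-1/s) \<le> ((-1/r) - (-1/s)) * exp (-(-1/r)\<^sup>2/2)"
      by (rule G_interval) (use ab r in auto)
    also have "\<dots> = ((r - s) / (r * s)) * exp (-(1/r)\<^sup>2/2)"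
      using s r by (simp add: field_simps power2_eq_square)
    also have "\<dots> \<le> ((r - s) / (r * s)) * (2 * r^3)"
      by (rule mult_left_mono[OF exp_cube_bound[OF r]]) (use s sr in auto)
    also have "\<dots> = 2 * (r - s) * r * (r / s)"
      using s r by (simp add: field_simps power3_eq_cube)
    also have "\<dots> \<le> 2 * (r - s) * r * 2"
      by (rule mult_left_mono) (use True s sr r in \<open>auto simp: field_simps\<close>)
    also have "\<dots> \<le> 4 * (r\<^sup>2 - s\<^sup>2)"
      using s sr by (simp add: power2_eq_square algebra_simps mult_right_mono)
    finally show ?thesis .
  next
    case False
    have "G (-1/r) \<le> 1 / (-1/r)\<^sup>2" by (rule G_tail) (use r in simp)
    also have "\<dots> = r\<^sup>2" by (simp add: power2_eq_square)
    finally have "G (-1/r) - G (-1/s) \<le> r\<^sup>2" using G_nonneg[of "-1/s"] by linarith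
    also have "r\<^sup>2 \<le> 4 * (r\<^sup>2 - s\<^sup>2)"
    proof -
      have "(2 * s)\<^sup>2 \<le> r\<^sup>2" using False s by (intro power_mono) auto
      then have "4 * (s * s) \<le> r * r" by (simp add: power2_eq_square)
      moreover have "0 \<le> r * r" by simp
      ultimately show ?thesis unfolding power2_eq_square by (smt (verit))
    qed
    finally show ?thesis .
  qed
qed

lemma G_lip:
  assumes "0 < s" "0 < r"
  shows "\<bar>G (-1/s) - G (-1/r)\<bar> \<le> 4 * \<bar>s\<^sup>2 - r\<^sup>2\<bar>"
proof (cases "s \<le> r")
  case True
  have m: "G (-1/s) \<le> G (-1/r)" by (rule G_mono) (use True assms in \<open>simp add: field_simps\<close>)
  have "s\<^sup>2 \<le> r\<^sup>2" using True assms by (intro power_mono) auto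
  then show ?thesis using G_lip1[OF assms(1) True] m by simp
next
  case False
  have m: "G (-1/r) \<le> G (-1/s)" by (rule G_mono) (use False assms in \<open>simp add: field_simps\<close>)
  have "r\<^sup>2 \<le> s\<^sup>2" using False assms by (intro power_mono) auto
  then show ?thesis using G_lip1[OF assms(2)] False m by simp
qed

lemma dotp_diff: "dotp p w (\<lambda>j. x j - m j) = dotp p w x - dotp p w m"
  by (simp add: dotp_def right_diff_distrib sum_subtractf)

lemma dotp_meas_Pi: "(\<lambda>x. dotp p w x) \<in> borel_measurable (PiM {..<p} (\<lambda>_. borel))"
  unfolding dotp_def by measurable

lemma mv_distr:
  assumes N: "mvnormal p \<mu> S N" and q: "quadf p S w > 0"
  shows "distr N borel (\<lambda>x. dotp p w x) = density lborel (\<lambda>x. ennreal (normal_density (dotp p w \<mu>) (sqrt (quadf p S w)) x))"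
    and "(\<lambda>x. dotp p w x) \<in> borel_measurable N"
    and "prob_space N"
proof -
  show "distr N borel (\<lambda>x. dotp p w x) = density lborel (\<lambda>x. ennreal (normal_density (dotp p w \<mu>) (sqrt (quadf p S w)) x))"
    using N q unfolding mvnormal_def by auto
  have "sets N = sets (PiM {..<p} (\<lambda>_. borel))" using N unfolding mvnormal_def by auto
  then show "(\<lambda>x. dotp p w x) \<in> borel_measurable N"
    using dotp_meas_Pi measurable_cong_sets by blast
  show "prob_space N" using N unfolding mvnormal_def by auto
qed

lemma mv_lt:
  assumes N: "mvnormal p \<mu> S N" and q: "quadf p S w > 0"
  shows "measure N {x \<in> space N. dotp p w (\<lambda>j. x j - m j) < 0} = G ((dotp p w m - dotp p w \<mu>) / sqrt (quadf p S w))"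
proof -
  note d = mv_distr[OF N q]
  have "{x \<in> space N. dotp p w (\<lambda>j. x j - m j) < 0} = (\<lambda>x. dotp p w x) -` {..<dotp p w m} \<inter> space N"
    by (auto simp: dotp_diff)
  then have "measure N {x \<in> space N. dotp p w (\<lambda>j. x j - m j) < 0} = measure (distr N borel (\<lambda>x. dotp p w x)) {..<dotp p w m}"
    using measure_distr[OF d(2), of "{..<dotp p w m}"] by simp
  also have "\<dots> = G ((dotp p w m - dotp p w \<mu>) / sqrt (quadf p S w))"
    unfolding d(1) by (rule G_normal_lt) (use q in simp)
  finally show ?thesis .
qed

lemma mv_ge:
  assumes N: "mvnormal p \<mu> S N" and q: "quadf p S w > 0"
  shows "measure N {x \<in> space N. \<not> dotp p w (\<lambda>j. x j - m j) < 0} = G ((dotp p w \<mu> - dotp p w m) / sqrt (quadf p S w))"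
proof -
  note d = mv_distr[OF N q]
  have "{x \<in> space N. \<not> dotp p w (\<lambda>j. x j - m j) < 0} = (\<lambda>x. dotp p w x) -` {dotp p w m..} \<inter> space N"
    by (auto simp: dotp_diff)
  then have "measure N {x \<in> space N. \<not> dotp p w (\<lambda>j. x j - m j) < 0} = measure (distr N borel (\<lambda>x. dotp p w x)) {dotp p w m..}"
    using measure_distr[OF d(2), of "{dotp p w m..}"] by simp
  also have "\<dots> = G ((dotp p w \<mu> - dotp p w m) / sqrt (quadf p S w))"
    unfolding d(1) by (rule G_normal_ge) (use q in simp)
  finally show ?thesis .
qed

lemma misrate_eq:
  assumes N1: "mvnormal p \<mu>1 S P1" and N2: "mvnormal p \<mu>2 S P2" and q: "quadf p S w > 0"
  shows "misrate P1 P2 (linrule p w m) =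
     1/2 * G (- dotp p w (\<lambda>j. \<mu>1 j - m j) / sqrt (quadf p S w))
   + 1/2 * G (- dotp p w (\<lambda>j. m j - \<mu>2 j) / sqrt (quadf p S w))"
proof -
  have e1: "{x \<in> space P1. linrule p w m x \<noteq> 1} = {x \<in> space P1. dotp p w (\<lambda>j. x j - m j) < 0}"
    by (auto simp: linrule_def)
  have e2: "{x \<in> space P2. linrule p w m x \<noteq> 2} = {x \<in> space P2. \<not> dotp p w (\<lambda>j. x j - m j) < 0}"
    by (auto simp: linrule_def)
  show ?thesis
    unfolding misrate_def e1 e2 mv_lt[OF N1 q] mv_ge[OF N2 q]
    by (simp add: dotp_diff)
qed



lemma vinf_ge: "j < p \<Longrightarrow> \<bar>v j\<bar> \<le> vinf p v"
  unfolding vinf_def by (rule Max_ge) auto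

lemma vinf_nonneg: "0 \<le> vinf p v"
  unfolding vinf_def by (rule Max_ge[THEN order_trans[rotated]]) auto

lemma vinf_attained: assumes "vinf p v > 0" shows "\<exists>j<p. \<bar>v j\<bar> = vinf p v"
proof -
  have "vinf p v \<in> insert 0 ((\<lambda>j. \<bar>v j\<bar>) ` {..<p})"
    unfolding vinf_def by (rule Max_in) auto
  with assms show ?thesis by auto
qed

lemma minf_ge: "j < p \<Longrightarrow> k < p \<Longrightarrow> \<bar>A j k\<bar> \<le> minf p A"
  unfolding minf_def by (rule Max_ge) force+

lemma minf_nonneg: "0 \<le> minf p A"
  unfolding minf_def by (rule Max_ge[THEN order_trans[rotated]]) auto

lemma vl1_nonneg: "0 \<le> vl1 p v" unfolding vl1_def by (simp add: sum_nonneg)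

lemma dotp_bound:
  assumes "\<And>j. j < p \<Longrightarrow> \<bar>x j\<bar> \<le> B"
  shows "\<bar>dotp p w x\<bar> \<le> vl1 p w * B"
proof -
  have "\<bar>dotp p w x\<bar> \<le> (\<Sum>j<p. \<bar>w j * x j\<bar>)" unfolding dotp_def by (rule sum_abs)
  also have "\<dots> \<le> (\<Sum>j<p. \<bar>w j\<bar> * B)"
    by (rule sum_mono) (use assms in \<open>auto simp: abs_mult intro: mult_left_mono\<close>)
  finally show ?thesis by (simp add: vl1_def sum_distrib_right)
qed

definition bil :: "nat \<Rightarrow> (nat \<Rightarrow> nat \<Rightarrow> real) \<Rightarrow> (nat \<Rightarrow> real) \<Rightarrow> (nat \<Rightarrow> real) \<Rightarrow> real" where
  "bil p A x y = (\<Sum>j<p. \<Sum>k<p. x j * A j k * y k)"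

lemma quadf_bil: "quadf p A x = bil p A x x" by (simp add: quadf_def bil_def)

lemma bil_bound:
  assumes "\<And>j k. j < p \<Longrightarrow> k < p \<Longrightarrow> \<bar>A j k\<bar> \<le> S"
  shows "\<bar>bil p A x y\<bar> \<le> vl1 p x * vl1 p y * S"
proof -
  have "\<bar>bil p A x y\<bar> \<le> (\<Sum>j<p. \<bar>\<Sum>k<p. x j * A j k * y k\<bar>)" unfolding bil_def by (rule sum_abs)
  also have "\<dots> \<le> (\<Sum>j<p. \<Sum>k<p. \<bar>x j\<bar> * \<bar>y k\<bar> * S)"
  proof (rule sum_mono)
    fix j assume j: "j \<in> {..<p}"
    have "\<bar>\<Sum>k<p. x j * A j k * y k\<bar> \<le> (\<Sum>k<p. \<bar>x j * A j k * y k\<bar>)" by (rule sum_abs)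
    also have "\<dots> \<le> (\<Sum>k<p. \<bar>x j\<bar> * \<bar>y k\<bar> * S)"
    proof (rule sum_mono)
      fix k assume k: "k \<in> {..<p}"
      have "\<bar>A j k\<bar> \<le> S" using assms j k by auto
      then have "\<bar>x j\<bar> * \<bar>A j k\<bar> * \<bar>y k\<bar> \<le> \<bar>x j\<bar> * S * \<bar>y k\<bar>"
        by (intro mult_right_mono mult_left_mono) auto
      then show "\<bar>x j * A j k * y k\<bar> \<le> \<bar>x j\<bar> * \<bar>y k\<bar> * S" by (simp add: abs_mult ac_simps)
    qed
    finally show "\<bar>\<Sum>k<p. x j * A j k * y k\<bar> \<le> (\<Sum>k<p. \<bar>x j\<bar> * \<bar>y k\<bar> * S)" .
  qed
  also have "\<dots> = (\<Sum>j<p. \<Sum>k<p. \<bar>x j\<bar> * \<bar>y k\<bar>) * S"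
    by (simp add: sum_distrib_right)
  also have "\<dots> = vl1 p x * vl1 p y * S"
    by (simp add: vl1_def sum_product)
  finally show ?thesis .
qed

lemma quadf_bound:
  assumes "\<And>j k. j < p \<Longrightarrow> k < p \<Longrightarrow> \<bar>A j k\<bar> \<le> S"
  shows "\<bar>quadf p A x\<bar> \<le> (vl1 p x)\<^sup>2 * S"
  using bil_bound[OF assms, where x=x and y=x] by (simp add: quadf_bil power2_eq_square)

lemma quadf_comb:
  "quadf p A (\<lambda>i. t * x i + r * y i) = t\<^sup>2 * quadf p A x + t * r * (bil p A x y + bil p A y x) + r\<^sup>2 * quadf p A y"
  unfolding quadf_def bil_def
  by (simp add: sum.distrib sum_distrib_left algebra_simps power2_eq_square)

lemma quadf_diff: "quadf p A w - quadf p B w = quadf p (\<lambda>j k. A j k - B j k) w"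
  unfolding quadf_def by (simp add: sum_subtractf algebra_simps)

lemma vl1_comb: "vl1 p (\<lambda>i. t * x i + r * y i) \<le> \<bar>t\<bar> * vl1 p x + \<bar>r\<bar> * vl1 p y"
proof -
  have "vl1 p (\<lambda>i. t * x i + r * y i) \<le> (\<Sum>j<p. \<bar>t\<bar> * \<bar>x j\<bar> + \<bar>r\<bar> * \<bar>y j\<bar>)"
    unfolding vl1_def by (rule sum_mono) (auto simp: abs_mult[symmetric] intro: abs_triangle_ineq[THEN order_trans])
  also have "\<dots> = \<bar>t\<bar> * vl1 p x + \<bar>r\<bar> * vl1 p y"
    by (simp add: vl1_def sum.distrib sum_distrib_left)
  finally show ?thesis .
qed

lemma dotp_comb: "dotp p (\<lambda>i. t * x i + r * y i) m = t * dotp p x m + r * dotp p y m"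
  unfolding dotp_def by (simp add: sum.distrib sum_distrib_left algebra_simps)

lemma transfer:
  assumes w: "w \<in> feas p c m"
    and mm: "\<And>i. i < p \<Longrightarrow> \<bar>m' i - m i\<bar> \<le> \<eta>"
    and j: "j < p" "m' j \<noteq> 0" "1 / \<bar>m' j\<bar> \<le> c - \<gamma>"
    and g: "\<gamma> > 0" and ce1: "c\<^sup>2 * \<eta> \<le> \<gamma>" and ce2: "c * \<eta> \<le> 1" and eta: "\<eta> \<ge> 0"
    and S: "\<And>i k. i < p \<Longrightarrow> k < p \<Longrightarrow> \<bar>A i k\<bar> \<le> S"
    and qw: "quadf p A w \<ge> 0"
  shows "\<exists>v \<in> feas p c m'. quadf p A v \<le> quadf p A w + 4 * (c\<^sup>2 * \<eta> / \<gamma> + c * \<eta>) * c\<^sup>2 * S"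
proof -
  have wz: "\<And>i. i \<ge> p \<Longrightarrow> w i = 0" and wl: "vl1 p w \<le> c" and wd: "dotp p w m = 1"
    using w by (auto simp: feas_def)
  have S0: "S \<ge> 0" using S[OF j(1) j(1)] by linarith
  have cg: "c - \<gamma> > 0" using j(2,3) by (smt (verit) divide_pos_pos zero_less_abs_iff)
  have c0: "c > 0" using cg g by linarith
  define \<alpha> where "\<alpha> = dotp p w m'"
  have "\<alpha> - 1 = dotp p w (\<lambda>i. m' i - m i)"
    unfolding \<alpha>_def wd[symmetric] dotp_def by (simp add: sum_subtractf right_diff_distrib)
  then have "\<bar>\<alpha> - 1\<bar> \<le> vl1 p w * \<eta>" using dotp_bound[of p "\<lambda>i. m' i - m i" \<eta> w] mm by simp
  also have "\<dots> \<le> c * \<eta>" using wl eta by (rule mult_right_mono)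
  finally have a1: "\<bar>\<alpha> - 1\<bar> \<le> c * \<eta>" .
  define \<delta> where "\<delta> = c\<^sup>2 * \<eta> / \<gamma>"
  have d0: "0 \<le> \<delta>" "\<delta> \<le> 1" using ce1 g eta by (auto simp: \<delta>_def)
  define t where "t = 1 - \<delta>"
  have t0: "0 \<le> t" "t \<le> 1" using d0 by (auto simp: t_def)
  define r where "r = 1 - t * \<alpha>"
  have "r = \<delta> + t * (1 - \<alpha>)" by (simp add: r_def t_def algebra_simps)
  moreover have "\<bar>t * (1 - \<alpha>)\<bar> \<le> c * \<eta>"
  proof -
    have "\<bar>t * (1 - \<alpha>)\<bar> = t * \<bar>\<alpha> - 1\<bar>" using t0 by (simp add: abs_mult abs_minus_commute)
    also have "\<dots> \<le> 1 * (c * \<eta>)" using t0 a1 by (intro mult_mono) auto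
    finally show ?thesis by simp
  qed
  ultimately have rb: "\<bar>r\<bar> \<le> \<delta> + c * \<eta>" using d0 by linarith
  have r2: "\<bar>r\<bar> \<le> 2" using rb d0 ce2 by linarith
  define e where "e = (\<lambda>i. if i = j then 1 / m' j else 0)"
  have "dotp p e m' = (\<Sum>i<p. if i = j then 1 else 0)"
    unfolding dotp_def by (rule sum.cong) (use j in \<open>auto simp: e_def\<close>)
  then have ed: "dotp p e m' = 1" using j by simp
  have el: "vl1 p e = 1 / \<bar>m' j\<bar>" using j unfolding vl1_def e_def by (simp add: if_distrib cong: if_cong)
  have el2: "vl1 p e \<le> c" using el j(3) g by linarith
  have el3: "vl1 p e \<le> c - \<gamma>" using el j(3) by linarith
  define v where "v = (\<lambda>i. t * w i + r * e i)"
  have vz: "\<forall>i\<ge>p. v i = 0" using wz j(1) by (auto simp: v_def e_def)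
  have vd: "dotp p v m' = 1"
    unfolding v_def dotp_comb ed \<alpha>_def[symmetric] r_def by simp
  have "vl1 p v \<le> \<bar>t\<bar> * vl1 p w + \<bar>r\<bar> * vl1 p e" unfolding v_def by (rule vl1_comb)
  also have "\<dots> \<le> t * c + (\<delta> + c * \<eta>) * (c - \<gamma>)"
    using t0 wl rb el3 d0 eta c0 vl1_nonneg[of p e] vl1_nonneg[of p w]
    by (intro add_mono mult_mono) auto
  also have "\<dots> = c - c * \<eta> * \<gamma>"
    using g by (simp add: t_def \<delta>_def field_simps power2_eq_square)
  also have "\<dots> \<le> c" using c0 eta g by simp
  finally have vl: "vl1 p v \<le> c" .
  have vf: "v \<in> feas p c m'" using vz vd vl by (simp add: feas_def)
  have B1: "\<bar>bil p A w e\<bar> \<le> c\<^sup>2 * S"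
  proof -
    have "\<bar>bil p A w e\<bar> \<le> vl1 p w * vl1 p e * S" by (rule bil_bound[OF S])
    also have "\<dots> \<le> c * c * S" using wl el2 S0 vl1_nonneg[of p w] vl1_nonneg[of p e]
      by (intro mult_mono) auto
    finally show ?thesis by (simp add: power2_eq_square)
  qed
  have B2: "\<bar>bil p A e w\<bar> \<le> c\<^sup>2 * S"
  proof -
    have "\<bar>bil p A e w\<bar> \<le> vl1 p e * vl1 p w * S" by (rule bil_bound[OF S])
    also have "\<dots> \<le> c * c * S" using wl el2 S0 vl1_nonneg[of p w] vl1_nonneg[of p e]
      by (intro mult_mono) auto
    finally show ?thesis by (simp add: power2_eq_square)
  qed
  have Qe: "quadf p A e \<le> c\<^sup>2 * S"
  proof -
    have "\<bar>quadf p A e\<bar> \<le> (vl1 p e)\<^sup>2 * S" by (rule quadf_bound[OF S])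
    also have "\<dots> \<le> c\<^sup>2 * S" using el2 S0 vl1_nonneg[of p e]
      by (intro mult_right_mono power_mono) auto
    finally show ?thesis by simp
  qed
  have T1: "t\<^sup>2 * quadf p A w \<le> quadf p A w"
  proof -
    have "t\<^sup>2 \<le> 1" using t0 by (simp add: power_le_one)
    then show ?thesis using qw mult_right_mono[of "t\<^sup>2" 1 "quadf p A w"] by simp
  qed
  have T2: "t * r * (bil p A w e + bil p A e w) \<le> \<bar>r\<bar> * (2 * (c\<^sup>2 * S))"
  proof -
    have "t * r * (bil p A w e + bil p A e w) \<le> \<bar>t * r * (bil p A w e + bil p A e w)\<bar>" by simp
    also have "\<dots> = \<bar>t\<bar> * \<bar>r\<bar> * \<bar>bil p A w e + bil p A e w\<bar>" by (simp add: abs_mult)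
    also have "\<dots> \<le> 1 * \<bar>r\<bar> * (2 * (c\<^sup>2 * S))"
      using t0 B1 B2 by (intro mult_mono) auto
    finally show ?thesis by simp
  qed
  have T3: "r\<^sup>2 * quadf p A e \<le> \<bar>r\<bar> * (2 * (c\<^sup>2 * S))"
  proof -
    have "r\<^sup>2 = \<bar>r\<bar> * \<bar>r\<bar>" by (simp add: power2_eq_square)
    also have "\<dots> \<le> \<bar>r\<bar> * 2" using r2 by (intro mult_left_mono) auto
    finally have "r\<^sup>2 \<le> \<bar>r\<bar> * 2" .
    have "r\<^sup>2 * quadf p A e \<le> r\<^sup>2 * (c\<^sup>2 * S)" using Qe by (intro mult_left_mono) auto
    also have "\<dots> \<le> (\<bar>r\<bar> * 2) * (c\<^sup>2 * S)" using \<open>r\<^sup>2 \<le> \<bar>r\<bar> * 2\<close> S0 by (intro mult_right_mono) auto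
    finally have "r\<^sup>2 * quadf p A e \<le> (\<bar>r\<bar> * 2) * (c\<^sup>2 * S)" .
    then show ?thesis by simp
  qed
  have "quadf p A v = t\<^sup>2 * quadf p A w + t * r * (bil p A w e + bil p A e w) + r\<^sup>2 * quadf p A e"
    unfolding v_def by (rule quadf_comb)
  also have "\<dots> \<le> quadf p A w + \<bar>r\<bar> * (4 * (c\<^sup>2 * S))" using T1 T2 T3 by linarith
  also have "\<dots> \<le> quadf p A w + (\<delta> + c * \<eta>) * (4 * (c\<^sup>2 * S))"
    using rb S0 by (intro add_left_mono mult_right_mono) auto
  finally have "quadf p A v \<le> quadf p A w + 4 * (c\<^sup>2 * \<eta> / \<gamma> + c * \<eta>) * c\<^sup>2 * S"
    by (simp add: \<delta>_def algebra_simps)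
  with vf show ?thesis by blast
qed



lemma posdef_nonneg: assumes "posdef p A" shows "quadf p A v \<ge> 0"
proof (cases "\<exists>j<p. v j \<noteq> 0")
  case True then show ?thesis using assms unfolding posdef_def by force
next
  case False then show ?thesis unfolding quadf_def by simp
qed

lemma dotp_one_nonzero: assumes "dotp p w m = 1" shows "\<exists>j<p. w j \<noteq> 0"
proof (rule ccontr)
  assume "\<not> ?thesis"
  then have "dotp p w m = 0" unfolding dotp_def by simp
  with assms show False by simp
qed

lemma one_x:
  fixes x q q0 h :: real
  assumes x: "\<bar>x - 1\<bar> \<le> h" and h: "h \<le> 1/4" and q0: "q0 \<ge> 0"
  shows "\<bar>q / x\<^sup>2 - q0\<bar> \<le> 2 * \<bar>q - q0\<bar> + 4 * h * q0"
proof -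
  have x1: "x \<ge> 3/4" "x \<le> 5/4" using x h by auto
  have x2: "x\<^sup>2 \<ge> 9/16"
  proof -
    have "(3/4)\<^sup>2 \<le> x\<^sup>2" using x1 by (intro power_mono) auto
    then show ?thesis by (simp add: power2_eq_square)
  qed
  have xp: "x\<^sup>2 > 0" using x2 by linarith
  have eq: "q / x\<^sup>2 - q0 = (q - q0) / x\<^sup>2 + q0 * ((1 - x) * (1 + x) / x\<^sup>2)"
  proof -
    have xx: "x \<noteq> 0" using x1 by simp
    show ?thesis using xx by (simp add: field_simps power2_eq_square)
  qed
  have a1: "\<bar>(q - q0) / x\<^sup>2\<bar> \<le> 2 * \<bar>q - q0\<bar>"
  proof -
    have "\<bar>(q - q0) / x\<^sup>2\<bar> = \<bar>q - q0\<bar> / x\<^sup>2" by (simp add: abs_div)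
    also have "\<dots> \<le> 2 * \<bar>q - q0\<bar>"
    proof -
      have "\<bar>q - q0\<bar> * 1 \<le> \<bar>q - q0\<bar> * (2 * x\<^sup>2)" using x2 by (intro mult_left_mono) auto
      then show ?thesis using xp by (simp add: pos_divide_le_eq ac_simps)
    qed
    finally show ?thesis .
  qed
  have a2: "\<bar>(1 - x) * (1 + x) / x\<^sup>2\<bar> \<le> 4 * h"
  proof -
    have "\<bar>(1 - x) * (1 + x) / x\<^sup>2\<bar> = \<bar>1 - x\<bar> * (1 + x) / x\<^sup>2" using x1 by (simp add: abs_mult abs_div)
    also have "\<dots> \<le> h * (9/4) / (9/16)"
    proof (rule frac_le)
      have "0 \<le> h" using x abs_ge_zero[of "x - 1"] by linarith
      then show "0 \<le> h * (9/4)" by simp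
      show "\<bar>1 - x\<bar> * (1 + x) \<le> h * (9/4)" using x x1 by (intro mult_mono) (auto simp: abs_minus_commute)
      show "0 < (9/16::real)" by simp
      show "9/16 \<le> x\<^sup>2" by (rule x2)
    qed
    finally show ?thesis by simp
  qed
  have "\<bar>q / x\<^sup>2 - q0\<bar> \<le> \<bar>(q - q0) / x\<^sup>2\<bar> + q0 * \<bar>(1 - x) * (1 + x) / x\<^sup>2\<bar>"
  proof -
    have "\<bar>q / x\<^sup>2 - q0\<bar> \<le> \<bar>(q - q0) / x\<^sup>2\<bar> + \<bar>q0 * ((1 - x) * (1 + x) / x\<^sup>2)\<bar>"
      unfolding eq by (rule abs_triangle_ineq)
    then show ?thesis using q0 by (simp add: abs_mult)
  qed
  also have "\<dots> \<le> 2 * \<bar>q - q0\<bar> + q0 * (4 * h)"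
    using a1 a2 q0 by (intro add_mono mult_left_mono) auto
  finally show ?thesis by (simp add: algebra_simps)
qed

lemma G_piece:
  assumes x: "\<bar>x - 1\<bar> \<le> h" and h: "h \<le> 1/4" and q: "q > 0" and q0: "q0 > 0"
  shows "\<bar>G (- x / sqrt q) - G (- 1 / sqrt q0)\<bar> \<le> 4 * (2 * \<bar>q - q0\<bar> + 4 * h * q0)"
proof -
  have xp: "x > 0" using x h by auto
  define s where "s = sqrt q / x"
  have sp: "s > 0" using xp q by (simp add: s_def)
  have e1: "- x / sqrt q = - 1 / s" using xp q by (simp add: s_def field_simps)
  have e2: "s\<^sup>2 = q / x\<^sup>2" using q by (simp add: s_def power_divide)
  have "\<bar>G (- x / sqrt q) - G (- 1 / sqrt q0)\<bar> = \<bar>G (- 1 / s) - G (- 1 / sqrt q0)\<bar>"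
    by (simp only: e1)
  also have "\<dots> \<le> 4 * \<bar>s\<^sup>2 - (sqrt q0)\<^sup>2\<bar>"
    by (rule G_lip) (use sp q0 in auto)
  also have "\<dots> = 4 * \<bar>q / x\<^sup>2 - q0\<bar>" using q0 by (simp add: e2)
  also have "\<dots> \<le> 4 * (2 * \<bar>q - q0\<bar> + 4 * h * q0)"
    using one_x[OF x h, of q0 q] q0 by simp
  finally show ?thesis .
qed

lemma final_arith:
  fixes \<epsilon> c \<eta> S \<Delta> q0 :: real
  assumes e: "\<epsilon> > 0" and c: "c \<ge> \<epsilon>" and eta: "\<eta> \<ge> 0" and S: "S \<ge> 0"
    and D: "\<Delta> \<le> 4 * (c\<^sup>2 * \<eta> / (\<epsilon>/2) + c * \<eta>) * c\<^sup>2 * S + 2 * c\<^sup>2 * \<eta>"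
    and q0: "q0 \<le> c\<^sup>2 * S"
  shows "8 * \<Delta> + 16 * (c * \<eta>) * q0 \<le> (16 + 120/\<epsilon>) * (c\<^sup>2 * \<eta> + c^4 * S * \<eta>)"
proof -
  have c0: "c > 0" using e c by linarith
  define T where "T = c^3 * \<eta> * S"
  define U where "U = c^4 * S * \<eta>"
  have T0: "T \<ge> 0" using c0 eta S by (simp add: T_def)
  have U0: "U \<ge> 0" using c0 eta S by (simp add: U_def)
  have A0: "c\<^sup>2 * \<eta> \<ge> 0" using eta by simp
  have TU: "T \<le> U / \<epsilon>"
  proof -
    have "\<epsilon> * T \<le> c * T" using c T0 by (intro mult_right_mono) auto
    also have "c * T = U" by (simp add: T_def U_def power_eq_if)
    finally show ?thesis using e by (simp add: field_simps)
  qed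
  have "4 * (c\<^sup>2 * \<eta> / (\<epsilon>/2) + c * \<eta>) * c\<^sup>2 * S = 8 * (U / \<epsilon>) + 4 * T"
    using e by (simp add: T_def U_def field_simps power_eq_if)
  with D have D2: "\<Delta> \<le> 8 * (U / \<epsilon>) + 4 * T + 2 * (c\<^sup>2 * \<eta>)" by simp
  have "16 * (c * \<eta>) * q0 \<le> 16 * (c * \<eta>) * (c\<^sup>2 * S)"
    using q0 c0 eta by (intro mult_left_mono) auto
  also have "\<dots> = 16 * T" by (simp add: T_def power_eq_if)
  finally have Q: "16 * (c * \<eta>) * q0 \<le> 16 * T" .
  have "8 * \<Delta> + 16 * (c * \<eta>) * q0 \<le> 16 * (c\<^sup>2 * \<eta>) + 64 * (U / \<epsilon>) + 48 * T"
    using D2 Q by linarith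
  also have "\<dots> \<le> 16 * (c\<^sup>2 * \<eta>) + 112 * (U / \<epsilon>)" using TU by linarith
  also have "\<dots> \<le> (16 + 120/\<epsilon>) * (c\<^sup>2 * \<eta> + U)"
  proof -
    have a: "0 \<le> 120 / \<epsilon> * (c\<^sup>2 * \<eta>)" using e A0 by simp
    have b: "0 \<le> 16 * U" using U0 by simp
    have "(16 + 120/\<epsilon>) * (c\<^sup>2 * \<eta> + U) = 16 * (c\<^sup>2 * \<eta>) + 120/\<epsilon> * (c\<^sup>2 * \<eta>) + 16 * U + 120 * (U / \<epsilon>)"
      by (simp add: ring_distribs)
    moreover have "0 \<le> 8 * (U / \<epsilon>)" using U0 e by simp
    ultimately show ?thesis using a b by linarith
  qed
  finally show ?thesis by (simp add: U_def)
qed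

lemma misrate_01:
  assumes "prob_space P1" "prob_space P2"
  shows "0 \<le> misrate P1 P2 d" "misrate P1 P2 d \<le> 1"
proof -
  interpret a: prob_space P1 by fact
  interpret b: prob_space P2 by fact
  have "measure P1 {x \<in> space P1. d x \<noteq> 1} \<le> 1" by (rule a.prob_le_1)
  moreover have "measure P2 {x \<in> space P2. d x \<noteq> 2} \<le> 1" by (rule b.prob_le_1)
  moreover have "0 \<le> measure P1 {x \<in> space P1. d x \<noteq> 1}" "0 \<le> measure P2 {x \<in> space P2. d x \<noteq> 2}" by auto
  ultimately show "misrate P1 P2 d \<le> 1" "0 \<le> misrate P1 P2 d" unfolding misrate_def by linarith+
qed



lemma det:
  fixes p :: nat and mu1 mu2 mud mua mu1h mu2h mudh muah wc wh :: "nat \<Rightarrow> real"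
    and Sg Sgh :: "nat \<Rightarrow> nat \<Rightarrow> real" and c \<epsilon> \<eta> :: real
    and P1 P2 :: "(nat \<Rightarrow> real) measure"
  assumes mud: "mud = (\<lambda>j. (mu1 j - mu2 j) / 2)" and mua: "mua = (\<lambda>j. (mu1 j + mu2 j) / 2)"
    and mudh: "mudh = (\<lambda>j. (mu1h j - mu2h j) / 2)" and muah: "muah = (\<lambda>j. (mu1h j + mu2h j) / 2)"
    and pd: "posdef p Sg" and N1: "mvnormal p mu1 Sg P1" and N2: "mvnormal p mu2 Sg P2"
    and eps: "\<epsilon> > 0" and big: "vinf p mud > \<epsilon>" and cbig: "c > \<epsilon> + 1 / vinf p mud"
    and wcm: "is_minimizer p c mud Sg wc"
    and whm: "feas p c mudh \<noteq> {} \<Longrightarrow> is_minimizer p c mudh Sgh wh"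
    and eta: "\<eta> \<ge> 0" "\<eta> \<le> \<epsilon>/2" "\<eta> \<le> \<epsilon>^3/4"
    and e1: "\<And>j. j < p \<Longrightarrow> \<bar>mu1h j - mu1 j\<bar> \<le> \<eta>"
    and e2: "\<And>j. j < p \<Longrightarrow> \<bar>mu2h j - mu2 j\<bar> \<le> \<eta>"
    and eS: "\<And>j k. j < p \<Longrightarrow> k < p \<Longrightarrow> \<bar>Sgh j k - Sg j k\<bar> \<le> \<eta>"
  shows "\<bar>misrate P1 P2 (linrule p wh muah) - misrate P1 P2 (linrule p wc mua)\<bar>
           \<le> (16 + 120/\<epsilon>) * (c\<^sup>2 * \<eta> + c^4 * minf p Sg * \<eta>)"
proof -
  define S where "S = minf p Sg"
  have S0: "S \<ge> 0" by (simp add: S_def minf_nonneg)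
  have SB: "\<And>j k. j < p \<Longrightarrow> k < p \<Longrightarrow> \<bar>Sg j k\<bar> \<le> S" by (simp add: S_def minf_ge)
  define v where "v = vinf p mud"
  have v: "v > \<epsilon>" using big by (simp add: v_def)
  have vp: "1 / v > 0" using v eps by simp
  have cv: "c > \<epsilon> + 1 / v" using cbig by (simp add: v_def)
  have ce: "c \<ge> \<epsilon>" using cv vp by linarith
  have c0: "c > 0" using ce eps by linarith
  have pr1: "prob_space P1" and pr2: "prob_space P2" using N1 N2 by (auto simp: mvnormal_def)
  let ?X = "misrate P1 P2 (linrule p wh muah) - misrate P1 P2 (linrule p wc mua)"
  have X1: "\<bar>?X\<bar> \<le> 1" using misrate_01[OF pr1 pr2] by (smt (verit, best))
  have RHS0: "0 \<le> c^4 * S * \<eta>" using S0 eta c0 by simp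
  show ?thesis
  proof (cases "c\<^sup>2 * \<eta> \<le> \<epsilon>/2 \<and> c * \<eta> \<le> 1/4")
    case False
    have "1 \<le> 4/\<epsilon> * (c\<^sup>2 * \<eta>)"
    proof (cases "c\<^sup>2 * \<eta> \<le> \<epsilon>/2")
      case True
      then have ce2: "c * \<eta> > 1/4" using False by auto
      have "\<epsilon> * (1/4) \<le> c * (c * \<eta>)" using ce ce2 eps by (intro mult_mono) auto
      then have "\<epsilon> / 4 \<le> c\<^sup>2 * \<eta>" by (simp add: power2_eq_square mult.assoc)
      then show ?thesis using eps by (simp add: field_simps)
    next
      case False
      then show ?thesis using eps by (simp add: field_simps)
    qed
    also have "\<dots> \<le> (16 + 120/\<epsilon>) * (c\<^sup>2 * \<eta> + c^4 * S * \<eta>)"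
    proof -
      have "4/\<epsilon> \<le> 16 + 120/\<epsilon>" using eps by (simp add: field_simps)
      moreover have "c\<^sup>2 * \<eta> \<le> c\<^sup>2 * \<eta> + c^4 * S * \<eta>" using RHS0 by simp
      ultimately show ?thesis using eps eta by (intro mult_mono) auto
    qed
    finally show ?thesis using X1 by (simp add: S_def)
  next
    case True
    then have ce1: "c\<^sup>2 * \<eta> \<le> \<epsilon>/2" and ce2: "c * \<eta> \<le> 1/4" by auto
    have g: "\<epsilon>/2 > 0" using eps by simp
    have ed: "\<And>j. j < p \<Longrightarrow> \<bar>mudh j - mud j\<bar> \<le> \<eta>"
    proof -
      fix j assume j: "j < p"
      have "mudh j - mud j = ((mu1h j - mu1 j) - (mu2h j - mu2 j)) / 2"
        by (simp add: mud mudh field_simps)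
      then have "\<bar>mudh j - mud j\<bar> = \<bar>(mu1h j - mu1 j) - (mu2h j - mu2 j)\<bar> / 2"
        by (metis abs_divide abs_numeral)
      also have "\<dots> \<le> (\<eta> + \<eta>) / 2" using e1[OF j] e2[OF j] by (intro divide_right_mono) linarith+
      finally show "\<bar>mudh j - mud j\<bar> \<le> \<eta>" by simp
    qed
    have ed': "\<And>j. j < p \<Longrightarrow> \<bar>mud j - mudh j\<bar> \<le> \<eta>" using ed by (simp add: abs_minus_commute)
    obtain j0 where j0: "j0 < p" "\<bar>mud j0\<bar> = v" using vinf_attained[of p mud] v eps by (auto simp: v_def)
    have hj: "\<bar>mudh j0\<bar> \<ge> v - \<eta>" using ed[OF j0(1)] j0(2) by linarith
    have vh: "v - \<eta> \<ge> \<epsilon>/2" using v eta by linarith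
    have hj0: "mudh j0 \<noteq> 0" using hj vh eps by auto
    have hjb: "1 / \<bar>mudh j0\<bar> \<le> c - \<epsilon>/2"
    proof -
      have "1 / \<bar>mudh j0\<bar> \<le> 1 / (v - \<eta>)" using hj vh eps by (intro divide_left_mono) auto
      also have "1 / (v - \<eta>) = 1 / v + \<eta> / (v * (v - \<eta>))" using vh v eps by (simp add: field_simps)
      also have "\<eta> / (v * (v - \<eta>)) \<le> \<eta> / (\<epsilon> * (\<epsilon>/2))"
        using v vh eps eta by (intro divide_left_mono mult_mono) auto
      also have "\<eta> / (\<epsilon> * (\<epsilon>/2)) \<le> \<epsilon>/2"
      proof -
        have "\<eta> \<le> \<epsilon>/2 * (\<epsilon> * (\<epsilon>/2))" using eta(3) by (simp add: power3_eq_cube)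
        then show ?thesis using eps by (simp add: divide_le_eq)
      qed
      finally show ?thesis using cv by linarith
    qed
    have jb: "1 / \<bar>mud j0\<bar> \<le> c - \<epsilon>/2" using j0 cv eps by simp
    have mj0: "mud j0 \<noteq> 0" using j0 v eps by auto
    have wcf: "wc \<in> feas p c mud" and wcopt: "\<And>u. u \<in> feas p c mud \<Longrightarrow> quadf p Sg wc \<le> quadf p Sg u"
      using wcm by (auto simp: is_minimizer_def)
    have wcl: "vl1 p wc \<le> c" and wcd: "dotp p wc mud = 1" using wcf by (auto simp: feas_def)
    define q0 where "q0 = quadf p Sg wc"
    have q0p: "q0 > 0" using pd dotp_one_nonzero[OF wcd] unfolding posdef_def q0_def by blast
    have q0b: "q0 \<le> c\<^sup>2 * S"
    proof -
      have "\<bar>q0\<bar> \<le> (vl1 p wc)\<^sup>2 * S" unfolding q0_def by (rule quadf_bound[OF SB])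
      also have "\<dots> \<le> c\<^sup>2 * S" using wcl S0 vl1_nonneg[of p wc] by (intro mult_right_mono power_mono) auto
      finally show ?thesis by simp
    qed
    obtain v1 where v1: "v1 \<in> feas p c mudh"
      and v1q: "quadf p Sg v1 \<le> q0 + 4 * (c\<^sup>2 * \<eta> / (\<epsilon>/2) + c * \<eta>) * c\<^sup>2 * S"
      using transfer[OF wcf ed j0(1) hj0 hjb g ce1 _ eta(1) SB posdef_nonneg[OF pd]] ce2
      unfolding q0_def by auto
    then have whm': "is_minimizer p c mudh Sgh wh" using whm by auto
    have whf: "wh \<in> feas p c mudh" and whopt: "\<And>u. u \<in> feas p c mudh \<Longrightarrow> quadf p Sgh wh \<le> quadf p Sgh u"
      using whm' by (auto simp: is_minimizer_def)
    have whl: "vl1 p wh \<le> c" and whd: "dotp p wh mudh = 1" using whf by (auto simp: feas_def)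
    define q where "q = quadf p Sg wh"
    have qp: "q > 0" using pd dotp_one_nonzero[OF whd] unfolding posdef_def q_def by blast
    obtain u1 where u1: "u1 \<in> feas p c mud"
      and u1q: "quadf p Sg u1 \<le> q + 4 * (c\<^sup>2 * \<eta> / (\<epsilon>/2) + c * \<eta>) * c\<^sup>2 * S"
      using transfer[OF whf ed' j0(1) mj0 jb g ce1 _ eta(1) SB posdef_nonneg[OF pd]] ce2
      unfolding q_def by auto
    have pert: "\<And>u. vl1 p u \<le> c \<Longrightarrow> \<bar>quadf p Sgh u - quadf p Sg u\<bar> \<le> c\<^sup>2 * \<eta>"
    proof -
      fix u assume u: "vl1 p u \<le> c"
      have "\<bar>quadf p Sgh u - quadf p Sg u\<bar> = \<bar>quadf p (\<lambda>j k. Sgh j k - Sg j k) u\<bar>"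
        by (simp add: quadf_diff)
      also have "\<dots> \<le> (vl1 p u)\<^sup>2 * \<eta>" by (rule quadf_bound) (use eS in auto)
      also have "\<dots> \<le> c\<^sup>2 * \<eta>" using u eta vl1_nonneg[of p u] by (intro mult_right_mono power_mono) auto
      finally show "\<bar>quadf p Sgh u - quadf p Sg u\<bar> \<le> c\<^sup>2 * \<eta>" .
    qed
    have v1l: "vl1 p v1 \<le> c" using v1 by (auto simp: feas_def)
    define D where "D = 4 * (c\<^sup>2 * \<eta> / (\<epsilon>/2) + c * \<eta>) * c\<^sup>2 * S"
    have "q \<le> quadf p Sgh wh + c\<^sup>2 * \<eta>" using pert[OF whl] unfolding q_def by linarith
    also have "\<dots> \<le> quadf p Sgh v1 + c\<^sup>2 * \<eta>" using whopt[OF v1] by simp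
    also have "\<dots> \<le> quadf p Sg v1 + 2 * c\<^sup>2 * \<eta>" using pert[OF v1l] by linarith
    finally have qa: "q \<le> q0 + D + 2 * c\<^sup>2 * \<eta>" using v1q unfolding D_def by linarith
    have qb: "q0 \<le> q + D" using wcopt[OF u1] u1q unfolding q0_def D_def by linarith
    have D0: "D \<ge> 0" unfolding D_def using eps eta S0 c0 by simp
    have cn: "0 \<le> c\<^sup>2 * \<eta>" using eta by simp
    have Dl: "\<bar>q - q0\<bar> \<le> D + 2 * c\<^sup>2 * \<eta>" using qa qb cn by (simp add: abs_le_iff)
    have mis_h: "misrate P1 P2 (linrule p wh muah) =
        1/2 * G (- dotp p wh (\<lambda>j. mu1 j - muah j) / sqrt q) + 1/2 * G (- dotp p wh (\<lambda>j. muah j - mu2 j) / sqrt q)"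
      unfolding q_def by (rule misrate_eq[OF N1 N2 qp[unfolded q_def]])
    have mis_c: "misrate P1 P2 (linrule p wc mua) =
        1/2 * G (- dotp p wc (\<lambda>j. mu1 j - mua j) / sqrt q0) + 1/2 * G (- dotp p wc (\<lambda>j. mua j - mu2 j) / sqrt q0)"
      unfolding q0_def by (rule misrate_eq[OF N1 N2 q0p[unfolded q0_def]])
    have o1: "dotp p wc (\<lambda>j. mu1 j - mua j) = 1"
    proof -
      have "(\<lambda>j. mu1 j - mua j) = mud" by (auto simp: mud mua field_simps)
      then show ?thesis using wcd by simp
    qed
    have o2: "dotp p wc (\<lambda>j. mua j - mu2 j) = 1"
    proof -
      have "(\<lambda>j. mua j - mu2 j) = mud" by (auto simp: mud mua field_simps)
      then show ?thesis using wcd by simp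
    qed
    have x1: "\<bar>dotp p wh (\<lambda>j. mu1 j - muah j) - 1\<bar> \<le> c * \<eta>"
    proof -
      have "dotp p wh (\<lambda>j. mu1 j - muah j) - 1 = dotp p wh (\<lambda>j. mu1 j - muah j) - dotp p wh mudh"
        using whd by simp
      also have "\<dots> = dotp p wh (\<lambda>j. mu1 j - mu1h j)"
        unfolding dotp_def sum_subtractf[symmetric] by (rule sum.cong) (auto simp: muah mudh field_simps)
      finally have "\<bar>dotp p wh (\<lambda>j. mu1 j - muah j) - 1\<bar> = \<bar>dotp p wh (\<lambda>j. mu1 j - mu1h j)\<bar>" by simp
      also have "\<dots> \<le> vl1 p wh * \<eta>" by (rule dotp_bound) (use e1 in \<open>auto simp: abs_minus_commute\<close>)
      also have "\<dots> \<le> c * \<eta>" using whl eta(1) by (rule mult_right_mono)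
      finally show ?thesis .
    qed
    have x2: "\<bar>dotp p wh (\<lambda>j. muah j - mu2 j) - 1\<bar> \<le> c * \<eta>"
    proof -
      have "dotp p wh (\<lambda>j. muah j - mu2 j) - 1 = dotp p wh (\<lambda>j. muah j - mu2 j) - dotp p wh mudh"
        using whd by simp
      also have "\<dots> = dotp p wh (\<lambda>j. mu2h j - mu2 j)"
        unfolding dotp_def sum_subtractf[symmetric] by (rule sum.cong) (auto simp: muah mudh field_simps)
      finally have "\<bar>dotp p wh (\<lambda>j. muah j - mu2 j) - 1\<bar> = \<bar>dotp p wh (\<lambda>j. mu2h j - mu2 j)\<bar>" by simp
      also have "\<dots> \<le> vl1 p wh * \<eta>" by (rule dotp_bound) (use e2 in auto)
      also have "\<dots> \<le> c * \<eta>" using whl eta(1) by (rule mult_right_mono)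
      finally show ?thesis .
    qed
    have g1: "\<bar>G (- dotp p wh (\<lambda>j. mu1 j - muah j) / sqrt q) - G (- 1 / sqrt q0)\<bar> \<le> 4 * (2 * \<bar>q - q0\<bar> + 4 * (c * \<eta>) * q0)"
      by (rule G_piece[OF x1 ce2 qp q0p])
    have g2: "\<bar>G (- dotp p wh (\<lambda>j. muah j - mu2 j) / sqrt q) - G (- 1 / sqrt q0)\<bar> \<le> 4 * (2 * \<bar>q - q0\<bar> + 4 * (c * \<eta>) * q0)"
      by (rule G_piece[OF x2 ce2 qp q0p])
    have "\<bar>?X\<bar> \<le> 4 * (2 * \<bar>q - q0\<bar> + 4 * (c * \<eta>) * q0)"
      unfolding mis_h mis_c o1 o2 using g1 g2 by (simp add: abs_le_iff)
    also have "\<dots> = 8 * \<bar>q - q0\<bar> + 16 * (c * \<eta>) * q0" by simp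
    also have "\<dots> \<le> (16 + 120/\<epsilon>) * (c\<^sup>2 * \<eta> + c^4 * S * \<eta>)"
      by (rule final_arith[OF eps ce eta(1) S0 _ q0b]) (use Dl in \<open>simp add: D_def\<close>)
    finally show ?thesis by (simp add: S_def)
  qed
qed



theorem theorem1:
  fixes M :: "nat \<Rightarrow> 'w measure"
    and p :: "nat \<Rightarrow> nat"
    and mu1 mu2 :: "nat \<Rightarrow> nat \<Rightarrow> real"
    and Sigma :: "nat \<Rightarrow> nat \<Rightarrow> nat \<Rightarrow> real"
    and c :: "nat \<Rightarrow> real"
    and \<epsilon> :: real
    and P1 P2 :: "nat \<Rightarrow> (nat \<Rightarrow> real) measure"
    and mu1h mu2h :: "nat \<Rightarrow> 'w \<Rightarrow> nat \<Rightarrow> real"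
    and Sigmah :: "nat \<Rightarrow> 'w \<Rightarrow> nat \<Rightarrow> nat \<Rightarrow> real"
    and a :: "nat \<Rightarrow> real"
    and wc :: "nat \<Rightarrow> nat \<Rightarrow> real"
    and wh :: "nat \<Rightarrow> 'w \<Rightarrow> nat \<Rightarrow> real"
  defines "mud \<equiv> \<lambda>n j. (mu1 n j - mu2 n j) / 2"
    and "mua \<equiv> \<lambda>n j. (mu1 n j + mu2 n j) / 2"
    and "mudh \<equiv> \<lambda>n \<omega> j. (mu1h n \<omega> j - mu2h n \<omega> j) / 2"
    and "muah \<equiv> \<lambda>n \<omega> j. (mu1h n \<omega> j + mu2h n \<omega> j) / 2"
  assumes M: "\<And>n. prob_space (M n)"
    and Sigma_pd: "\<And>n. posdef (p n) (Sigma n)"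
    and P1: "\<And>n. mvnormal (p n) (mu1 n) (Sigma n) (P1 n)"
    and P2: "\<And>n. mvnormal (p n) (mu2 n) (Sigma n) (P2 n)"
    and eps: "\<epsilon> > 0"
    and mud_big: "\<And>n. vinf (p n) (mud n) > \<epsilon>"
    and c_big: "\<And>n. c n > \<epsilon> + 1 / vinf (p n) (mud n)"
    and a_pos: "\<And>n. a n > 0"
    and a_lim: "a \<longlonglongrightarrow> 0"
    and Sigma_rate: "bigOp M (\<lambda>n \<omega>. minf (p n) (\<lambda>j k. Sigmah n \<omega> j k - Sigma n j k)) a"
    and mu1_rate: "bigOp M (\<lambda>n \<omega>. vinf (p n) (\<lambda>j. mu1h n \<omega> j - mu1 n j)) a"
    and mu2_rate: "bigOp M (\<lambda>n \<omega>. vinf (p n) (\<lambda>j. mu2h n \<omega> j - mu2 n j)) a"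
    and wc_min: "\<And>n. is_minimizer (p n) (c n) (mud n) (Sigma n) (wc n)"
    and wh_min: "\<And>n \<omega>. \<omega> \<in> space (M n) \<Longrightarrow> feas (p n) (c n) (mudh n \<omega>) \<noteq> {} \<Longrightarrow>
                   is_minimizer (p n) (c n) (mudh n \<omega>) (Sigmah n \<omega>) (wh n \<omega>)"
  shows "bigOp M
           (\<lambda>n \<omega>. misrate (P1 n) (P2 n) (linrule (p n) (wh n \<omega>) (muah n \<omega>))
                  - misrate (P1 n) (P2 n) (linrule (p n) (wc n) (mua n)))
           (\<lambda>n. (c n)\<^sup>2 * a n * (1 + (c n)\<^sup>2 * minf (p n) (Sigma n)))"
proof -
  have mud_eq: "\<And>n. mud n = (\<lambda>j. (mu1 n j - mu2 n j) / 2)" using assms(1) by simp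
  have mua_eq: "\<And>n. mua n = (\<lambda>j. (mu1 n j + mu2 n j) / 2)" using assms(2) by simp
  have mudh_eq: "\<And>n \<omega>. mudh n \<omega> = (\<lambda>j. (mu1h n \<omega> j - mu2h n \<omega> j) / 2)" using assms(3) by simp
  have muah_eq: "\<And>n \<omega>. muah n \<omega> = (\<lambda>j. (mu1h n \<omega> j + mu2h n \<omega> j) / 2)" using assms(4) by simp
  define C where "C = 16 + 120 / \<epsilon>"
  have C0: "C \<ge> 0" using eps by (simp add: C_def)
  define \<eta>0 where "\<eta>0 = min (\<epsilon>/2) (\<epsilon>^3/4)"
  have \<eta>0: "\<eta>0 > 0" using eps by (simp add: \<eta>0_def)
  show ?thesis
    unfolding bigOp_def
  proof (intro allI impI)
    fix e :: real assume e: "e > 0"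
    have e3: "e/3 > 0" using e by simp
    have "\<exists>K N. \<forall>n\<ge>N. \<exists>A\<in>sets (M n). {\<omega> \<in> space (M n). \<bar>minf (p n) (\<lambda>j k. Sigmah n \<omega> j k - Sigma n j k)\<bar> > K * a n} \<subseteq> A \<and> measure (M n) A \<le> e/3"
      using Sigma_rate e3 unfolding bigOp_def by blast
    then obtain K1 N1 where KN1': "\<forall>n\<ge>N1. \<exists>A\<in>sets (M n). {\<omega> \<in> space (M n). \<bar>minf (p n) (\<lambda>j k. Sigmah n \<omega> j k - Sigma n j k)\<bar> > K1 * a n} \<subseteq> A \<and> measure (M n) A \<le> e/3"
      by blast
    then have KN1: "\<And>n. n \<ge> N1 \<Longrightarrow> \<exists>A\<in>sets (M n). {\<omega> \<in> space (M n). \<bar>minf (p n) (\<lambda>j k. Sigmah n \<omega> j k - Sigma n j k)\<bar> > K1 * a n} \<subseteq> A \<and> measure (M n) A \<le> e/3" by blast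
    have "\<exists>K N. \<forall>n\<ge>N. \<exists>A\<in>sets (M n). {\<omega> \<in> space (M n). \<bar>vinf (p n) (\<lambda>j. mu1h n \<omega> j - mu1 n j)\<bar> > K * a n} \<subseteq> A \<and> measure (M n) A \<le> e/3"
      using mu1_rate e3 unfolding bigOp_def by blast
    then obtain K2 N2 where KN2': "\<forall>n\<ge>N2. \<exists>A\<in>sets (M n). {\<omega> \<in> space (M n). \<bar>vinf (p n) (\<lambda>j. mu1h n \<omega> j - mu1 n j)\<bar> > K2 * a n} \<subseteq> A \<and> measure (M n) A \<le> e/3"
      by blast
    then have KN2: "\<And>n. n \<ge> N2 \<Longrightarrow> \<exists>A\<in>sets (M n). {\<omega> \<in> space (M n). \<bar>vinf (p n) (\<lambda>j. mu1h n \<omega> j - mu1 n j)\<bar> > K2 * a n} \<subseteq> A \<and> measure (M n) A \<le> e/3" by blast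
    have "\<exists>K N. \<forall>n\<ge>N. \<exists>A\<in>sets (M n). {\<omega> \<in> space (M n). \<bar>vinf (p n) (\<lambda>j. mu2h n \<omega> j - mu2 n j)\<bar> > K * a n} \<subseteq> A \<and> measure (M n) A \<le> e/3"
      using mu2_rate e3 unfolding bigOp_def by blast
    then obtain K3 N3 where KN3': "\<forall>n\<ge>N3. \<exists>A\<in>sets (M n). {\<omega> \<in> space (M n). \<bar>vinf (p n) (\<lambda>j. mu2h n \<omega> j - mu2 n j)\<bar> > K3 * a n} \<subseteq> A \<and> measure (M n) A \<le> e/3"
      by blast
    then have KN3: "\<And>n. n \<ge> N3 \<Longrightarrow> \<exists>A\<in>sets (M n). {\<omega> \<in> space (M n). \<bar>vinf (p n) (\<lambda>j. mu2h n \<omega> j - mu2 n j)\<bar> > K3 * a n} \<subseteq> A \<and> measure (M n) A \<le> e/3" by blast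
    define K where "K = max (max K1 K2) (max K3 0)"
    have K0: "K \<ge> 0" and KK: "K1 \<le> K" "K2 \<le> K" "K3 \<le> K" by (auto simp: K_def)
    have "(\<lambda>n. K * a n) \<longlonglongrightarrow> K * 0" by (intro tendsto_mult tendsto_const a_lim)
    then have "eventually (\<lambda>n. K * a n < \<eta>0) sequentially" using \<eta>0 by (auto dest: order_tendstoD)
    then obtain N4 where N4: "\<And>n. n \<ge> N4 \<Longrightarrow> K * a n < \<eta>0" by (auto simp: eventually_sequentially)
    show "\<exists>K N. \<forall>n\<ge>N. \<exists>A\<in>sets (M n). {\<omega> \<in> space (M n). \<bar>misrate (P1 n) (P2 n) (linrule (p n) (wh n \<omega>) (muah n \<omega>))
                  - misrate (P1 n) (P2 n) (linrule (p n) (wc n) (mua n))\<bar> > K * ((c n)\<^sup>2 * a n * (1 + (c n)\<^sup>2 * minf (p n) (Sigma n)))} \<subseteq> A \<and> measure (M n) A \<le> e"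
    proof (intro exI allI impI)
      fix n assume n: "n \<ge> max (max N1 N2) (max N3 N4)"
      obtain A1 where A1: "A1 \<in> sets (M n)" "{\<omega> \<in> space (M n). \<bar>minf (p n) (\<lambda>j k. Sigmah n \<omega> j k - Sigma n j k)\<bar> > K1 * a n} \<subseteq> A1" "measure (M n) A1 \<le> e/3"
        using KN1[of n] n by auto
      obtain A2 where A2: "A2 \<in> sets (M n)" "{\<omega> \<in> space (M n). \<bar>vinf (p n) (\<lambda>j. mu1h n \<omega> j - mu1 n j)\<bar> > K2 * a n} \<subseteq> A2" "measure (M n) A2 \<le> e/3"
        using KN2[of n] n by auto
      obtain A3 where A3: "A3 \<in> sets (M n)" "{\<omega> \<in> space (M n). \<bar>vinf (p n) (\<lambda>j. mu2h n \<omega> j - mu2 n j)\<bar> > K3 * a n} \<subseteq> A3" "measure (M n) A3 \<le> e/3"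
        using KN3[of n] n by auto
      have Kan: "K * a n < \<eta>0" using N4 n by auto
      interpret P: prob_space "M n" by (rule M)
      have As: "A1 \<union> A2 \<union> A3 \<in> sets (M n)" using A1 A2 A3 by auto
      have "measure (M n) (A1 \<union> A2 \<union> A3) \<le> measure (M n) (A1 \<union> A2) + measure (M n) A3"
        using A1 A2 A3 by (intro measure_subadditive) (auto simp: P.emeasure_eq_measure)
      also have "\<dots> \<le> measure (M n) A1 + measure (M n) A2 + measure (M n) A3"
        using A1 A2 using measure_subadditive[of A1 "M n" A2] by (simp add: P.emeasure_eq_measure)
      finally have Am: "measure (M n) (A1 \<union> A2 \<union> A3) \<le> e" using A1 A2 A3 by linarith
      have sub: "{\<omega> \<in> space (M n). \<bar>misrate (P1 n) (P2 n) (linrule (p n) (wh n \<omega>) (muah n \<omega>))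
                  - misrate (P1 n) (P2 n) (linrule (p n) (wc n) (mua n))\<bar> > (C * K) * ((c n)\<^sup>2 * a n * (1 + (c n)\<^sup>2 * minf (p n) (Sigma n)))} \<subseteq> A1 \<union> A2 \<union> A3"
      proof (rule subsetI, rule ccontr)
        fix \<omega> assume w: "\<omega> \<in> {\<omega> \<in> space (M n). \<bar>misrate (P1 n) (P2 n) (linrule (p n) (wh n \<omega>) (muah n \<omega>))
                  - misrate (P1 n) (P2 n) (linrule (p n) (wc n) (mua n))\<bar> > (C * K) * ((c n)\<^sup>2 * a n * (1 + (c n)\<^sup>2 * minf (p n) (Sigma n)))}"
          and nA: "\<omega> \<notin> A1 \<union> A2 \<union> A3"
        have ws: "\<omega> \<in> space (M n)" using w by auto
        have b1: "minf (p n) (\<lambda>j k. Sigmah n \<omega> j k - Sigma n j k) \<le> K * a n"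
        proof -
          have "\<omega> \<notin> A1" using nA by blast
          then have "\<not> \<bar>minf (p n) (\<lambda>j k. Sigmah n \<omega> j k - Sigma n j k)\<bar> > K1 * a n" using A1(2) ws by blast
          moreover have "K1 * a n \<le> K * a n" using KK a_pos[of n] by (intro mult_right_mono) auto
          ultimately show ?thesis by linarith
        qed
        have b2: "vinf (p n) (\<lambda>j. mu1h n \<omega> j - mu1 n j) \<le> K * a n"
        proof -
          have "\<omega> \<notin> A2" using nA by blast
          then have "\<not> \<bar>vinf (p n) (\<lambda>j. mu1h n \<omega> j - mu1 n j)\<bar> > K2 * a n" using A2(2) ws by blast
          moreover have "K2 * a n \<le> K * a n" using KK a_pos[of n] by (intro mult_right_mono) auto
          ultimately show ?thesis by linarith
        qed
        have b3: "vinf (p n) (\<lambda>j. mu2h n \<omega> j - mu2 n j) \<le> K * a n"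
        proof -
          have "\<omega> \<notin> A3" using nA by blast
          then have "\<not> \<bar>vinf (p n) (\<lambda>j. mu2h n \<omega> j - mu2 n j)\<bar> > K3 * a n" using A3(2) ws by blast
          moreover have "K3 * a n \<le> K * a n" using KK a_pos[of n] by (intro mult_right_mono) auto
          ultimately show ?thesis by linarith
        qed
        have "\<bar>misrate (P1 n) (P2 n) (linrule (p n) (wh n \<omega>) (muah n \<omega>)) - misrate (P1 n) (P2 n) (linrule (p n) (wc n) (mua n))\<bar>
            \<le> (16 + 120/\<epsilon>) * ((c n)\<^sup>2 * (K * a n) + (c n)^4 * minf (p n) (Sigma n) * (K * a n))"
        proof (rule det[where mud="mud n" and mua="mua n" and mudh="mudh n \<omega>" and muah="muah n \<omega>"])
          show "mud n = (\<lambda>j. (mu1 n j - mu2 n j) / 2)" by (rule mud_eq)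
          show "mua n = (\<lambda>j. (mu1 n j + mu2 n j) / 2)" by (rule mua_eq)
          show "mudh n \<omega> = (\<lambda>j. (mu1h n \<omega> j - mu2h n \<omega> j) / 2)" by (rule mudh_eq)
          show "muah n \<omega> = (\<lambda>j. (mu1h n \<omega> j + mu2h n \<omega> j) / 2)" by (rule muah_eq)
          show "posdef (p n) (Sigma n)" by (rule Sigma_pd)
          show "mvnormal (p n) (mu1 n) (Sigma n) (P1 n)" by (rule P1)
          show "mvnormal (p n) (mu2 n) (Sigma n) (P2 n)" by (rule P2)
          show "\<epsilon> > 0" by (rule eps)
          show "vinf (p n) (mud n) > \<epsilon>" by (rule mud_big)
          show "c n > \<epsilon> + 1 / vinf (p n) (mud n)" by (rule c_big)
          show "is_minimizer (p n) (c n) (mud n) (Sigma n) (wc n)" by (rule wc_min)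
          show "feas (p n) (c n) (mudh n \<omega>) \<noteq> {} \<Longrightarrow> is_minimizer (p n) (c n) (mudh n \<omega>) (Sigmah n \<omega>) (wh n \<omega>)"
            by (rule wh_min[OF ws])
          show "K * a n \<ge> 0" using K0 a_pos[of n] by simp
          show "K * a n \<le> \<epsilon>/2" "K * a n \<le> \<epsilon>^3/4" using Kan by (auto simp: \<eta>0_def)
          show "\<And>j. j < p n \<Longrightarrow> \<bar>mu1h n \<omega> j - mu1 n j\<bar> \<le> K * a n"
          proof -
            fix j assume j: "j < p n"
            from vinf_ge[of j "p n" "\<lambda>j. mu1h n \<omega> j - mu1 n j", OF j] b2
            show "\<bar>mu1h n \<omega> j - mu1 n j\<bar> \<le> K * a n" by linarith
          qed
          show "\<And>j. j < p n \<Longrightarrow> \<bar>mu2h n \<omega> j - mu2 n j\<bar> \<le> K * a n"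
          proof -
            fix j assume j: "j < p n"
            from vinf_ge[of j "p n" "\<lambda>j. mu2h n \<omega> j - mu2 n j", OF j] b3
            show "\<bar>mu2h n \<omega> j - mu2 n j\<bar> \<le> K * a n" by linarith
          qed
          show "\<And>j k. j < p n \<Longrightarrow> k < p n \<Longrightarrow> \<bar>Sigmah n \<omega> j k - Sigma n j k\<bar> \<le> K * a n"
          proof -
            fix j k assume j: "j < p n" and k: "k < p n"
            from minf_ge[of j "p n" k "\<lambda>j k. Sigmah n \<omega> j k - Sigma n j k", OF j k] b1
            show "\<bar>Sigmah n \<omega> j k - Sigma n j k\<bar> \<le> K * a n" by linarith
          qed
        qed
        also have "\<dots> = (C * K) * ((c n)\<^sup>2 * a n * (1 + (c n)\<^sup>2 * minf (p n) (Sigma n)))"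
          by (simp add: C_def algebra_simps power_eq_if)
        finally show False using w by simp
      qed
      show "\<exists>A\<in>sets (M n). {\<omega> \<in> space (M n). \<bar>misrate (P1 n) (P2 n) (linrule (p n) (wh n \<omega>) (muah n \<omega>))
                  - misrate (P1 n) (P2 n) (linrule (p n) (wc n) (mua n))\<bar> > (C * K) * ((c n)\<^sup>2 * a n * (1 + (c n)\<^sup>2 * minf (p n) (Sigma n)))} \<subseteq> A \<and> measure (M n) A \<le> e"
        using As sub Am by blast
    qed
  qed
qed


end
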